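(* Let $(W,S)$ be a chordal Coxeter system, let $A=\{a,b,c\}$ be a maximal irreducible simplex of $(W,S)$, and let $d\in S-(A\cup A^\perp)$ be such that $\{a,b,d\}$ is a simplex. Then $\{a,b\}\cup A^\perp$ is a $(c,d)$-separator of $S$.
   Context: Coxeter system $(W,S)$: $W=\langle S\mid (st)^{m(s,t)}\ (m(s,t)<\infty)\rangle$, $m(s,s)=1$, $m(s,t)=m(t,s)\in\{2,\dots,\infty\}$. $\Gamma(W,S)$: graph on $S$ with edge $\{s,t\}$ iff $s\ne t$, $m(s,t)<\infty$; chordal: every cycle of length $\ge4$ has a chord. A simplex is $A\subseteq S$ with all $m(s,t)<\infty$; $A$ is irreducible if the graph on $A$ with edges $m(s,t)\ge3$ is connected; a maximal irreducible simplex is an irreducible simplex not properly contained in another irreducible simplex. $A^\perp=\{s\in S: m(s,x)=2\ \forall x\in A\}$. For $c,d\in S$, $B\subseteq S$ is a $(c,d)$-separator of $S$ if $c,d\notin B$ and $c$ and $d$ lie in different connected components of $\Gamma(W,S)-B$. *)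

theory Defs
  imports Main "HOL-Library.Extended_Nat"
begin

text \<open>A Coxeter system (W,S) is determined by its Coxeter matrix m on S,
  with values in {1,2,...} \<union> {\<infinity>}; all notions used below depend only on (S,m).\<close>

definition coxeter_matrix :: "'a set \<Rightarrow> ('a \<Rightarrow> 'a \<Rightarrow> enat) \<Rightarrow> bool" where
  "coxeter_matrix S m \<longleftrightarrow>
     (\<forall>s\<in>S. m s s = 1) \<and>
     (\<forall>s\<in>S. \<forall>t\<in>S. m s t = m t s) \<and>
     (\<forall>s\<in>S. \<forall>t\<in>S. s \<noteq> t \<longrightarrow> m s t \<ge> 2)"

definition cox_edge :: "'a set \<Rightarrow> ('a \<Rightarrow> 'a \<Rightarrow> enat) \<Rightarrow> 'a \<Rightarrow> 'a \<Rightarrow> bool" where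
  "cox_edge S m s t \<longleftrightarrow> s \<in> S \<and> t \<in> S \<and> s \<noteq> t \<and> m s t < \<infinity>"

definition chordal :: "'a set \<Rightarrow> ('a \<Rightarrow> 'a \<Rightarrow> enat) \<Rightarrow> bool" where
  "chordal S m \<longleftrightarrow>
     (\<forall>vs. distinct vs \<and> length vs \<ge> 4 \<and> set vs \<subseteq> S \<and>
        (\<forall>i < length vs. cox_edge S m (vs ! i) (vs ! ((i + 1) mod length vs)))
      \<longrightarrow> (\<exists>i < length vs. \<exists>j < length vs. i \<noteq> j \<and>
             j \<noteq> (i + 1) mod length vs \<and> i \<noteq> (j + 1) mod length vs \<and>
             cox_edge S m (vs ! i) (vs ! j)))"

definition simplex :: "'a set \<Rightarrow> ('a \<Rightarrow> 'a \<Rightarrow> enat) \<Rightarrow> 'a set \<Rightarrow> bool" where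
  "simplex S m A \<longleftrightarrow> A \<subseteq> S \<and> (\<forall>s\<in>A. \<forall>t\<in>A. m s t < \<infinity>)"

definition irreducible_simplex :: "'a set \<Rightarrow> ('a \<Rightarrow> 'a \<Rightarrow> enat) \<Rightarrow> 'a set \<Rightarrow> bool" where
  "irreducible_simplex S m A \<longleftrightarrow> simplex S m A \<and> A \<noteq> {} \<and>
     (\<forall>x\<in>A. \<forall>y\<in>A. (\<lambda>u v. u \<in> A \<and> v \<in> A \<and> u \<noteq> v \<and> m u v \<ge> 3)\<^sup>*\<^sup>* x y)"

definition maximal_irreducible_simplex :: "'a set \<Rightarrow> ('a \<Rightarrow> 'a \<Rightarrow> enat) \<Rightarrow> 'a set \<Rightarrow> bool" where
  "maximal_irreducible_simplex S m A \<longleftrightarrow> irreducible_simplex S m A \<and>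
     (\<forall>B. irreducible_simplex S m B \<and> A \<subseteq> B \<longrightarrow> B = A)"

definition perp :: "'a set \<Rightarrow> ('a \<Rightarrow> 'a \<Rightarrow> enat) \<Rightarrow> 'a set \<Rightarrow> 'a set" where
  "perp S m A = {s \<in> S. \<forall>x\<in>A. m s x = 2}"

definition separator :: "'a set \<Rightarrow> ('a \<Rightarrow> 'a \<Rightarrow> enat) \<Rightarrow> 'a \<Rightarrow> 'a \<Rightarrow> 'a set \<Rightarrow> bool" where
  "separator S m c d B \<longleftrightarrow> c \<notin> B \<and> d \<notin> B \<and>
     \<not> (\<lambda>u v. u \<notin> B \<and> v \<notin> B \<and> cox_edge S m u v)\<^sup>*\<^sup>* c d"

end

theory Submission
  imports Defs
begin

lemma path_exists:
  assumes "R\<^sup>*\<^sup>* c d"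
  shows "\<exists>ps. ps \<noteq> [] \<and> hd ps = c \<and> last ps = d \<and> successively R ps"
  using assms
proof (induction rule: converse_rtranclp_induct)
  case base
  then show ?case by (intro exI[of _ "[d]"]) simp
next
  case (step y z)
  then obtain ps where "ps \<noteq> [] \<and> hd ps = z \<and> last ps = d \<and> successively R ps" by blast
  then show ?case using step(1) by (intro exI[of _ "y # ps"]) (auto simp: successively_Cons)
qed

lemma split_two:
  assumes "i < j" "j < length ps"
  shows "ps = take i ps @ ps ! i # drop (Suc i) (take j ps) @ ps ! j # drop (Suc j) ps"
proof -
  have 1: "ps = take j ps @ ps ! j # drop (Suc j) ps" using assms by (simp add: id_take_nth_drop)
  have "take j ps = take i (take j ps) @ (take j ps) ! i # drop (Suc i) (take j ps)"
    using assms by (intro id_take_nth_drop) simp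
  also have "\<dots> = take i ps @ ps ! i # drop (Suc i) (take j ps)"
  proof -
    have "take i (take j ps) = take i ps" using assms by (simp add: min_def)
    moreover have "take j ps ! i = ps ! i" using assms by simp
    ultimately show ?thesis by simp
  qed
  finally show ?thesis using 1 by (metis append.assoc append_Cons)
qed

lemma succ_join:
  "successively R (xs @ [y]) \<Longrightarrow> successively R (y # zs) \<Longrightarrow> successively R (xs @ y # zs)"
  by (induction xs rule: induct_list012) (auto simp: successively_Cons)

lemma succ_split:
  "successively R (xs @ y # ys @ z # zs) \<Longrightarrow> successively R (xs @ [y]) \<and> successively R (z # zs)"
  by (simp only: successively_append_iff append_Cons[symmetric] append_assoc[symmetric]) simp

lemma hd_same: "hd (xs @ y # zs) = hd (xs @ y # ws)" by (cases xs) auto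
lemma last_same: "last (xs @ y # zs) = last (ws @ y # zs)" by (cases zs) auto

lemma shortest_path:
  assumes "R\<^sup>*\<^sup>* c d"
  obtains ps where "ps \<noteq> []" "hd ps = c" "last ps = d" "successively R ps" "distinct ps"
     "\<forall>i j. j < length ps \<longrightarrow> Suc i < j \<longrightarrow> \<not> R (ps ! i) (ps ! j)"
proof -
  define P where "P ps \<longleftrightarrow> ps \<noteq> [] \<and> hd ps = c \<and> last ps = d \<and> successively R ps" for ps
  obtain ps0 where "P ps0" using path_exists[OF assms] P_def by blast
  then obtain ps where P: "P ps" and min: "\<And>qs. P qs \<Longrightarrow> length ps \<le> length qs"
    using ex_has_least_nat[of P ps0 length] by blast
  have dist: "distinct ps"
  proof (rule ccontr)
    assume "\<not> distinct ps"
    then obtain xs ys zs y where eq: "ps = xs @ [y] @ ys @ [y] @ zs" using not_distinct_decomp by blast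
    define qs where "qs = xs @ y # zs"
    have "P qs" using P unfolding P_def qs_def eq
      using succ_split[of R xs y ys y zs] succ_join[of R xs y zs]
        hd_same[of xs y zs "ys @ y # zs"] last_same[of xs y zs "xs @ y # ys"] by simp
    moreover have "length qs < length ps" unfolding qs_def eq by simp
    ultimately show False using min by fastforce
  qed
  have ind: "\<forall>i j. j < length ps \<longrightarrow> Suc i < j \<longrightarrow> \<not> R (ps ! i) (ps ! j)"
  proof (intro allI impI notI)
    fix i j assume j: "j < length ps" "Suc i < j" and r: "R (ps ! i) (ps ! j)"
    define xs where "xs = take i ps"
    define ys where "ys = drop (Suc i) (take j ps)"
    define zs where "zs = drop (Suc j) ps"
    have eq: "ps = xs @ ps ! i # ys @ ps ! j # zs" unfolding xs_def ys_def zs_def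
      using split_two[of i j ps] j by simp
    have ysne: "ys \<noteq> []" unfolding ys_def using j by simp
    define qs where "qs = xs @ ps ! i # ps ! j # zs"
    have sp: "successively R ps" "hd ps = c" "last ps = d" using P P_def by auto
    let ?t = "xs @ ps ! i # ys @ ps ! j # zs"
    have s1: "successively R ?t" "hd ?t = c" "last ?t = d" using sp by (simp_all only: eq[symmetric])
    have "P qs" using s1 unfolding P_def qs_def
      using succ_split[of R xs "ps ! i" ys "ps ! j" zs] succ_join[of R xs "ps ! i" "ps ! j # zs"] r
        hd_same[of xs "ps ! i" "ps ! j # zs" "ys @ ps ! j # zs"] 
        last_same[of "xs @ [ps ! i]" "ps ! j" zs "xs @ ps ! i # ys"] by simp
    moreover have "length qs < length ps" unfolding qs_def using ysne by (subst (2) eq) simp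
    ultimately show False using min by fastforce
  qed
  show ?thesis using P dist ind that unfolding P_def by blast
qed

lemma chordal_fan:
  assumes ch: "chordal S m"
    and sym: "\<And>u v. cox_edge S m u v \<Longrightarrow> cox_edge S m v u"
    and dist: "distinct ps" and n: "length ps \<ge> 2" and setS: "set ps \<subseteq> S"
    and path: "\<And>i. Suc i < length ps \<Longrightarrow> cox_edge S m (ps ! i) (ps ! Suc i)"
    and ind: "\<And>i j. j < length ps \<Longrightarrow> Suc i < j \<Longrightarrow> \<not> cox_edge S m (ps ! i) (ps ! j)"
    and xn: "x \<notin> set ps" and x0: "cox_edge S m x (ps ! 0)"
    and xl: "cox_edge S m x (ps ! (length ps - 1))"
  shows "cox_edge S m x (ps ! 1)"
proof (rule ccontr)
  assume no1: "\<not> cox_edge S m x (ps ! 1)"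
  let ?E = "cox_edge S m"
  have irr: "\<And>u. \<not> ?E u u" by (simp add: cox_edge_def)
  define P where "P j \<longleftrightarrow> 1 \<le> j \<and> j < length ps \<and> ?E x (ps ! j)" for j
  have "P (length ps - 1)" using n xl unfolding P_def by auto
  define J where "J = (LEAST j. P j)"
  have PJ: "P J" unfolding J_def by (rule LeastI) fact
  have Jmin: "\<And>k. P k \<Longrightarrow> J \<le> k" unfolding J_def by (rule Least_le)
  have J2: "J \<ge> 2" using PJ no1 unfolding P_def by (cases "J = 1") auto
  have Jl: "J < length ps" using PJ P_def by simp
  define vs where "vs = x # take (Suc J) ps"
  have lvs: "length vs = J + 2" using Jl by (simp add: vs_def)
  have v0: "vs ! 0 = x" by (simp add: vs_def)
  have vp: "\<And>p. 0 < p \<Longrightarrow> p < J + 2 \<Longrightarrow> vs ! p = ps ! (p - 1)"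
    unfolding vs_def by (auto simp: nth_Cons split: nat.splits)
  have xS: "x \<in> S" using x0 by (simp add: cox_edge_def)
  have "set vs \<subseteq> S" using setS xS set_take_subset[of "Suc J" ps] by (auto simp: vs_def)
  moreover have "distinct vs" using dist xn set_take_subset[of "Suc J" ps] by (auto simp: vs_def)
  moreover have "\<forall>i < length vs. ?E (vs ! i) (vs ! ((i + 1) mod length vs))"
  proof (intro allI impI)
    fix i assume i: "i < length vs"
    show "?E (vs ! i) (vs ! ((i + 1) mod length vs))"
    proof (cases "i = J + 1")
      case True
      then have "(i + 1) mod length vs = 0" using lvs by simp
      have "?E (ps ! J) x" using PJ sym unfolding P_def by blast
      then show ?thesis using True vp[of i] v0 \<open>(i + 1) mod length vs = 0\<close> by simp
    next
      case False
      then have md: "(i + 1) mod length vs = i + 1" using lvs i by simp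
      show ?thesis
      proof (cases "i = 0")
        case True then show ?thesis using md v0 vp[of 1] x0 lvs by simp
      next
        case False
        then show ?thesis using md vp[of i] vp[of "i+1"] path[of "i - 1"] i lvs Jl \<open>i \<noteq> J + 1\<close>
          by simp
      qed
    qed
  qed
  moreover have "length vs \<ge> 4" using lvs J2 by simp
  ultimately have "\<exists>i < length vs. \<exists>j < length vs. i \<noteq> j \<and>
             j \<noteq> (i + 1) mod length vs \<and> i \<noteq> (j + 1) mod length vs \<and>
             ?E (vs ! i) (vs ! j)"
    using ch[unfolded chordal_def, rule_format, of vs] by simp
  then obtain i j where ij: "i < length vs" "j < length vs" "i \<noteq> j"
    "j \<noteq> (i + 1) mod length vs" "i \<noteq> (j + 1) mod length vs" "?E (vs ! i) (vs ! j)"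
    by blast
  have key: "q = p + 1 \<or> p = q + 1 \<or> (p = 0 \<and> q = J + 1) \<or> (q = 0 \<and> p = J + 1)"
    if pq: "p < J + 2" "q < J + 2" "?E (vs ! p) (vs ! q)" for p q
  proof -
    have x0case: "q = 1 \<or> q = J + 1" if "q < J + 2" "?E x (vs ! q)" for q
    proof -
      have "q \<noteq> 0" using that(2) irr v0 by (metis)
      then have e: "?E x (ps ! (q - 1))" using that vp by simp
      show ?thesis
      proof (rule ccontr)
        assume "\<not> (q = 1 \<or> q = J + 1)"
        then have "P (q - 1)" using e that \<open>q \<noteq> 0\<close> Jl unfolding P_def by auto
        then show False using Jmin[of "q - 1"] \<open>q \<noteq> 0\<close> that \<open>\<not> (q = 1 \<or> q = J + 1)\<close> by auto
      qed
    qed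
    show ?thesis
    proof (cases "p = 0")
      case True
      then show ?thesis using x0case[of q] pq v0 by auto
    next
      case pn: False
      show ?thesis
      proof (cases "q = 0")
        case True
        have "?E (vs ! p) x" using pq(3) True v0 by simp
        then have "?E x (vs ! p)" by (rule sym)
        then show ?thesis using x0case[of p] pq True by auto
      next
        case qn: False
        have e: "?E (ps ! (p - 1)) (ps ! (q - 1))" using pq vp pn qn by simp
        have ql: "q - 1 < length ps" "p - 1 < length ps" using pq Jl by auto
        have "\<not> Suc (p - 1) < q - 1" using ind[of "q - 1" "p - 1"] e ql by auto
        moreover have "\<not> Suc (q - 1) < p - 1" using ind[of "p - 1" "q - 1"] sym[OF e] ql by auto
        moreover have "p \<noteq> q" using e irr by auto
        ultimately show ?thesis using pn qn by auto
      qed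
    qed
  qed
  have k: "j = i + 1 \<or> i = j + 1 \<or> (i = 0 \<and> j = J + 1) \<or> (j = 0 \<and> i = J + 1)"
    using key[of i j] ij(1,2,6) lvs by simp
  have n4: "4 \<le> J + 2" using J2 by simp
  show False
  proof -
    consider "j = i + 1" | "i = j + 1" | "i = 0 \<and> j = J + 1" | "j = 0 \<and> i = J + 1" using k by blast
    then show False
    proof cases
      case 1 then show False using ij(2,4) lvs by simp
    next
      case 2 then show False using ij(1,5) lvs by simp
    next
      case 3 then show False using ij(5) lvs by simp
    next
      case 4 then show False using ij(4) lvs by simp
    qed
  qed
qed

lemma enat_ge3: "(x::enat) \<ge> 2 \<Longrightarrow> x \<noteq> 2 \<Longrightarrow> x \<ge> 3"
  by (cases x) (auto simp: numeral_eq_enat)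

theorem lemma4p1:
  fixes S :: "'a set" and m :: "'a \<Rightarrow> 'a \<Rightarrow> enat" and a b c d :: 'a
  assumes "coxeter_matrix S m"
    and "chordal S m"
    and "distinct [a, b, c]"
    and "maximal_irreducible_simplex S m {a, b, c}"
    and "d \<in> S - ({a, b, c} \<union> perp S m {a, b, c})"
    and "simplex S m {a, b, d}"
  shows "separator S m c d ({a, b} \<union> perp S m {a, b, c})"
proof -
  note cm = assms(1) and ch = assms(2) and dis = assms(3) and mx = assms(4) and dd = assms(5)
    and sd = assms(6)
  define A where "A = {a, b, c}"
  define B where "B = {a, b} \<union> perp S m {a, b, c}"
  let ?E = "cox_edge S m"
  have msym: "\<And>s t. s \<in> S \<Longrightarrow> t \<in> S \<Longrightarrow> m s t = m t s" using cm by (simp add: coxeter_matrix_def)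
  have mdiag: "\<And>s. s \<in> S \<Longrightarrow> m s s = 1" using cm by (simp add: coxeter_matrix_def)
  have mge2: "\<And>s t. s \<in> S \<Longrightarrow> t \<in> S \<Longrightarrow> s \<noteq> t \<Longrightarrow> m s t \<ge> 2" using cm by (simp add: coxeter_matrix_def)
  have sym: "\<And>u v. ?E u v \<Longrightarrow> ?E v u" unfolding cox_edge_def using msym by metis
  have irrA: "irreducible_simplex S m A" using mx by (simp add: maximal_irreducible_simplex_def A_def)
  have sA: "simplex S m A" using irrA by (simp add: irreducible_simplex_def)
  have AS: "A \<subseteq> S" and Afin: "\<forall>s\<in>A. \<forall>t\<in>A. m s t < \<infinity>" using sA by (auto simp: simplex_def)
  have dS: "d \<in> S" and dnA: "d \<notin> A" using dd by (auto simp: A_def)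
  have cd: "c \<noteq> d" using dd by auto
  have Eac: "?E a c" and Ebc: "?E b c" using AS Afin dis by (auto simp: cox_edge_def A_def)
  have Ead: "?E a d" and Ebd: "?E b d" using sd dd by (auto simp: cox_edge_def simplex_def)
  have aB: "a \<in> B" and bB: "b \<in> B" by (auto simp: B_def)
  have cB: "c \<notin> B" using dis mdiag AS by (auto simp: B_def perp_def A_def)
  have dB: "d \<notin> B" using dd by (auto simp: B_def)
  define R where "R u v \<longleftrightarrow> u \<notin> B \<and> v \<notin> B \<and> ?E u v" for u v
  have "\<not> R\<^sup>*\<^sup>* c d"
  proof
    assume "R\<^sup>*\<^sup>* c d"
    obtain ps where ps: "ps \<noteq> []" "hd ps = c" "last ps = d" "successively R ps"
      "distinct ps" "\<forall>i j. j < length ps \<longrightarrow> Suc i < j \<longrightarrow> \<not> R (ps ! i) (ps ! j)"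
      by (rule shortest_path[of R c d, OF \<open>R\<^sup>*\<^sup>* c d\<close>])
    have n2: "length ps \<ge> 2"
    proof (rule ccontr)
      assume "\<not> length ps \<ge> 2"
      moreover have "length ps \<noteq> 0" using ps(1) by simp
      ultimately have "length ps = 1" by linarith
      then have "hd ps = last ps" by (cases ps) auto
      then show False using ps cd by simp
    qed
    have p0: "ps ! 0 = c" using ps by (simp add: hd_conv_nth)
    have pl: "ps ! (length ps - 1) = d" using ps by (simp add: last_conv_nth)
    have Rst: "\<And>i. Suc i < length ps \<Longrightarrow> R (ps ! i) (ps ! Suc i)" by (rule successively_nth[OF ps(4)])
    have el: "ps ! k \<notin> B \<and> ps ! k \<in> S" if "k < length ps" for k
    proof (cases "Suc k < length ps")
      case True then show ?thesis using Rst[of k] by (auto simp: R_def cox_edge_def)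
    next
      case False
      then obtain k' where k': "k = Suc k'" using that n2 by (cases k) auto
      then have "Suc k' < length ps" using that by simp
      then have "R (ps ! k') (ps ! k)" using Rst[of k'] k' by simp
      then show ?thesis by (auto simp: R_def cox_edge_def)
    qed
    have setS: "set ps \<subseteq> S" and setB: "\<forall>x\<in>set ps. x \<notin> B" using el by (auto simp: in_set_conv_nth)
    have path: "\<And>i. Suc i < length ps \<Longrightarrow> ?E (ps ! i) (ps ! Suc i)" using Rst R_def by blast
    have ind: "\<And>i j. j < length ps \<Longrightarrow> Suc i < j \<Longrightarrow> \<not> ?E (ps ! i) (ps ! j)"
      using ps(6) el R_def by auto
    have Ea1: "?E a (ps ! 1)"
      using chordal_fan[OF ch sym ps(5) n2 setS path ind, of a] aB setB Eac Ead p0 pl by auto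
    have Eb1: "?E b (ps ! 1)"
      using chordal_fan[OF ch sym ps(5) n2 setS path ind, of b] bB setB Ebc Ebd p0 pl by auto
    have Ec1: "?E c (ps ! 1)" using path[of 0] p0 n2 by simp
    define v where "v = ps ! 1"
    have vS: "v \<in> S" and vB: "v \<notin> B" using el[of 1] n2 by (auto simp: v_def)
    have "ps ! 1 \<noteq> ps ! 0" using n2 by (subst nth_eq_iff_index_eq[OF ps(5)]) auto
    then have vc: "v \<noteq> c" using p0 unfolding v_def by simp
    have vA: "v \<notin> A" using vB vc by (auto simp: A_def B_def)
    obtain x0 where x0: "x0 \<in> A" "m v x0 \<noteq> 2" using vB vS by (auto simp: B_def perp_def A_def)
    have Ev: "\<And>x. x \<in> A \<Longrightarrow> ?E x v" using Ea1 Eb1 Ec1 by (auto simp: A_def v_def)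
    have mv3: "m v x0 \<ge> 3" using enat_ge3 mge2[of v x0] vS AS x0 vA by auto
    have mv3': "m x0 v \<ge> 3" using mv3 msym[of v x0] vS AS x0 by auto
    define A' where "A' = insert v A"
    have "simplex S m A'"
      unfolding simplex_def
    proof (intro conjI ballI)
      show "A' \<subseteq> S" using AS vS by (auto simp: A'_def)
    next
      fix s t assume st: "s \<in> A'" "t \<in> A'"
      have fin1: "m y v < \<infinity>" "m v y < \<infinity>" if "y \<in> A" for y
      proof -
        show "m y v < \<infinity>" using Ev[OF that] by (simp add: cox_edge_def)
        moreover have "y \<in> S" using that AS by auto
        ultimately show "m v y < \<infinity>" using msym[of y v] vS by simp
      qed
      show "m s t < \<infinity>"
        using st fin1 Afin mdiag[OF vS] unfolding A'_def by (auto simp: one_enat_def)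
    qed
    moreover have "A' \<noteq> {}" by (simp add: A'_def)
    moreover have "\<forall>x\<in>A'. \<forall>y\<in>A'. (\<lambda>u v. u \<in> A' \<and> v \<in> A' \<and> u \<noteq> v \<and> m u v \<ge> 3)\<^sup>*\<^sup>* x y"
    proof -
      let ?Q = "\<lambda>u v. u \<in> A' \<and> v \<in> A' \<and> u \<noteq> v \<and> m u v \<ge> 3"
      let ?QA = "\<lambda>u v. u \<in> A \<and> v \<in> A \<and> u \<noteq> v \<and> m u v \<ge> 3"
      have QA: "\<forall>x\<in>A. \<forall>y\<in>A. ?QA\<^sup>*\<^sup>* x y" using irrA by (simp add: irreducible_simplex_def)
      have mono: "?QA\<^sup>*\<^sup>* x y \<Longrightarrow> ?Q\<^sup>*\<^sup>* x y" for x y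
        by (rule rtranclp_mono[THEN predicate2D, rotated]) (auto simp: A'_def)
      have to: "\<forall>x\<in>A'. ?Q\<^sup>*\<^sup>* x0 x \<and> ?Q\<^sup>*\<^sup>* x x0"
      proof
        fix x assume "x \<in> A'"
        then consider "x = v" | "x \<in> A" by (auto simp: A'_def)
        then show "?Q\<^sup>*\<^sup>* x0 x \<and> ?Q\<^sup>*\<^sup>* x x0"
        proof cases
          case 1
          have "?Q x0 v" "?Q v x0" using mv3 mv3' x0 vA by (auto simp: A'_def)
          then show ?thesis using 1 by auto
        next
          case 2
          then show ?thesis using QA mono x0 by blast
        qed
      qed
      show ?thesis using to by (meson rtranclp_trans)
    qed
    ultimately have "irreducible_simplex S m A'" by (simp add: irreducible_simplex_def)
    moreover have "A \<subseteq> A'" by (auto simp: A'_def)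
    moreover have mxA: "\<forall>B. irreducible_simplex S m B \<and> A \<subseteq> B \<longrightarrow> B = A"
      using mx by (simp add: maximal_irreducible_simplex_def A_def)
    ultimately have "A' = A" by blast
    then show False using vA by (auto simp: A'_def)
  qed
  then show ?thesis unfolding separator_def B_def[symmetric] R_def using cB dB by simp
qed

end
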